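(* Let $\Gamma$ be the path on $K$ vertices. Assume either that $\lambda>1$ and $K=o(\sqrt n)$, or that $\lambda<1$ and $K=\ln(n)/\ln(1/\lambda)-\omega(\ln(\ln(n)))$. Then the total variation distance between $\mathbb{P}_0$ and $\mathbb{P}_1$ tends to $0$ as $n\to\infty$. Consequently, for any test $T(G)\in\{0,1\}$, $\mathbb{P}_1(T(G)=1)-\mathbb{P}_0(T(G)=1)\to0$.
   Context: Model: $n$ nodes; $\lambda>0$ fixed. $\mathbb{P}_0$: $G\sim\mathcal G(n,\lambda/n)$. $\mathbb{P}_1$: $G=G_0\cup G'$ with $G_0\sim\mathcal G(n,\lambda/n)$ and $G'$ the image of the path $1-2-\cdots-K$ under a uniformly random injection $[K]\to[n]$ independent of $G_0$. *)

theory Defs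
  imports "HOL-Probability.Probability" "HOL-Library.Landau_Symbols"
begin

text \<open>Vertices are 0,...,n-1; a graph is its set of edges, each edge a 2-element set.\<close>

definition all_edges :: "nat \<Rightarrow> nat set set" where
  "all_edges n = {e. \<exists>i j. i < j \<and> j < n \<and> e = {i, j}}"

definition erdos_renyi :: "nat \<Rightarrow> real \<Rightarrow> nat set set pmf" where
  "erdos_renyi n p =
     map_pmf (\<lambda>b. {e \<in> all_edges n. b e})
             (Pi_pmf (all_edges n) False (\<lambda>_. bernoulli_pmf p))"

definition injections :: "nat \<Rightarrow> nat \<Rightarrow> (nat \<Rightarrow> nat) set" where
  "injections K n = {f \<in> {..<K} \<rightarrow>\<^sub>E {..<n}. inj_on f {..<K}}"

definition path_image :: "nat \<Rightarrow> (nat \<Rightarrow> nat) \<Rightarrow> nat set set" where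
  "path_image K f = {{f i, f (Suc i)} | i. Suc i < K}"

definition P0 :: "nat \<Rightarrow> real \<Rightarrow> nat set set pmf" where
  "P0 n lam = erdos_renyi n (lam / real n)"

definition P1 :: "nat \<Rightarrow> real \<Rightarrow> nat \<Rightarrow> nat set set pmf" where
  "P1 n lam K =
     bind_pmf (erdos_renyi n (lam / real n)) (\<lambda>G0.
     bind_pmf (pmf_of_set (injections K n)) (\<lambda>f.
     return_pmf (G0 \<union> path_image K f)))"

definition tv_dist :: "'a pmf \<Rightarrow> 'a pmf \<Rightarrow> real" where
  "tv_dist p q = (SUP A. \<bar>measure_pmf.prob p A - measure_pmf.prob q A\<bar>)"

end

theory Submission
  imports Defs "HOL-Real_Asymp.Real_Asymp"
begin

lemma finite_all_edges: "finite (all_edges n)"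
proof -
  have "all_edges n \<subseteq> Pow {..<n}" by (auto simp: all_edges_def)
  then show ?thesis by (rule finite_subset) simp
qed

lemma set_er: "set_pmf (erdos_renyi n p) \<subseteq> Pow (all_edges n)"
  unfolding erdos_renyi_def by auto

lemma finite_set_er: "finite (set_pmf (erdos_renyi n p))"
  using finite_subset[OF set_er] finite_all_edges by blast

lemma prob_er_restrict:
  "measure_pmf.prob (erdos_renyi n p) X = measure_pmf.prob (erdos_renyi n p) (X \<inter> Pow (all_edges n))"
proof -
  let ?M = "erdos_renyi n p"
  have "measure_pmf.prob ?M X = measure_pmf.prob ?M (X \<inter> set_pmf ?M)" by (simp add: measure_Int_set_pmf)
  also have "X \<inter> set_pmf ?M = (X \<inter> Pow (all_edges n)) \<inter> set_pmf ?M" using set_er by blast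
  also have "measure_pmf.prob ?M \<dots> = measure_pmf.prob ?M (X \<inter> Pow (all_edges n))" by (simp add: measure_Int_set_pmf)
  finally show ?thesis .
qed

lemma prob_er_event:
  "measure_pmf.prob (erdos_renyi n p) {G. \<forall>e\<in>all_edges n. (e\<in>G) \<in> B e}
   = (\<Prod>e\<in>all_edges n. measure_pmf.prob (bernoulli_pmf p) (B e))"
proof -
  let ?E = "all_edges n"
  let ?Q = "Pi_pmf ?E False (\<lambda>_. bernoulli_pmf p)"
  have fin: "finite ?E" by (rule finite_all_edges)
  have "measure_pmf.prob (erdos_renyi n p) {G. \<forall>e\<in>?E. (e\<in>G) \<in> B e}
     = measure_pmf.prob ?Q {b. \<forall>e\<in>?E. b e \<in> B e}"
    unfolding erdos_renyi_def measure_map_pmf by (rule arg_cong[where f="measure_pmf.prob ?Q"]) auto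
  also have "\<dots> = measure_pmf.prob ?Q ({b. \<forall>e\<in>?E. b e \<in> B e} \<inter> set_pmf ?Q)" by (simp add: measure_Int_set_pmf)
  also have "{b. \<forall>e\<in>?E. b e \<in> B e} \<inter> set_pmf ?Q = PiE_dflt ?E False B \<inter> set_pmf ?Q"
    using set_Pi_pmf_subset[OF fin, of False "\<lambda>_. bernoulli_pmf p"] by (auto simp: PiE_dflt_def)
  also have "measure_pmf.prob ?Q \<dots> = measure_pmf.prob ?Q (PiE_dflt ?E False B)" by (simp add: measure_Int_set_pmf)
  also have "\<dots> = (\<Prod>e\<in>?E. measure_pmf.prob (bernoulli_pmf p) (B e))" by (rule measure_Pi_pmf_PiE_dflt[OF fin])
  finally show ?thesis .
qed

lemma prob_er_event':
  assumes "\<And>G. G \<subseteq> all_edges n \<Longrightarrow> G \<in> X \<longleftrightarrow> (\<forall>e\<in>all_edges n. (e\<in>G) \<in> B e)"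
  shows "measure_pmf.prob (erdos_renyi n p) X
   = (\<Prod>e\<in>all_edges n. measure_pmf.prob (bernoulli_pmf p) (B e))"
proof -
  have eq: "X \<inter> Pow (all_edges n) = {G. \<forall>e\<in>all_edges n. (e\<in>G) \<in> B e} \<inter> Pow (all_edges n)"
    using assms by auto
  have "measure_pmf.prob (erdos_renyi n p) X = measure_pmf.prob (erdos_renyi n p) (X \<inter> Pow (all_edges n))"
    by (rule prob_er_restrict)
  also have "\<dots> = measure_pmf.prob (erdos_renyi n p) ({G. \<forall>e\<in>all_edges n. (e\<in>G) \<in> B e} \<inter> Pow (all_edges n))"
    using eq by simp
  also have "\<dots> = measure_pmf.prob (erdos_renyi n p) {G. \<forall>e\<in>all_edges n. (e\<in>G) \<in> B e}"
    by (rule prob_er_restrict[symmetric])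
  finally show ?thesis by (simp add: prob_er_event)
qed

lemma bern_single: "0 \<le> p \<Longrightarrow> p \<le> 1 \<Longrightarrow> measure_pmf.prob (bernoulli_pmf p) {b} = (if b then p else 1 - p)"
  by (simp add: measure_pmf_single)

lemma pmf_er:
  assumes "G \<subseteq> all_edges n" "0 \<le> p" "p \<le> 1"
  shows "pmf (erdos_renyi n p) G = (\<Prod>e\<in>all_edges n. if e \<in> G then p else 1 - p)"
proof -
  have "pmf (erdos_renyi n p) G = measure_pmf.prob (erdos_renyi n p) {G}" by (simp add: measure_pmf_single)
  also have "\<dots> = (\<Prod>e\<in>all_edges n. measure_pmf.prob (bernoulli_pmf p) {e \<in> G})"
    by (rule prob_er_event') (use assms in auto)
  also have "\<dots> = (\<Prod>e\<in>all_edges n. if e \<in> G then p else 1 - p)"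
    using assms by (simp add: bern_single)
  finally show ?thesis .
qed

lemma pmf_er_out: "\<not> G \<subseteq> all_edges n \<Longrightarrow> pmf (erdos_renyi n p) G = 0"
  using set_er[of n p] by (auto simp add: pmf_eq_0_set_pmf)

lemma prob_er_superset:
  assumes "S \<subseteq> all_edges n" "0 \<le> p" "p \<le> 1"
  shows "measure_pmf.prob (erdos_renyi n p) {G. S \<subseteq> G} = p ^ card S"
proof -
  have "measure_pmf.prob (erdos_renyi n p) {G. S \<subseteq> G}
      = (\<Prod>e\<in>all_edges n. measure_pmf.prob (bernoulli_pmf p) (if e \<in> S then {True} else UNIV))"
    by (rule prob_er_event') (use assms in auto)
  also have "\<dots> = (\<Prod>e\<in>all_edges n. if e \<in> S then p else 1)"
    using assms by (intro prod.cong) (auto simp: bern_single)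
  also have "\<dots> = p ^ card S"
    using assms finite_all_edges by (simp add: prod.If_cases Int_absorb1 Int_absorb2[OF assms(1)] Int_commute)
  finally show ?thesis .
qed

lemma prob_er_union:
  assumes "H \<subseteq> G" "G \<subseteq> all_edges n" "0 \<le> p" "p \<le> 1"
  shows "measure_pmf.prob (erdos_renyi n p) {G0. G0 \<union> H = G}
       = (\<Prod>e\<in>all_edges n - H. if e \<in> G then p else 1 - p)"
proof -
  have "measure_pmf.prob (erdos_renyi n p) {G0. G0 \<union> H = G}
      = (\<Prod>e\<in>all_edges n. measure_pmf.prob (bernoulli_pmf p) (if e \<in> H then UNIV else {e \<in> G}))"
    by (rule prob_er_event') (use assms in auto)
  also have "\<dots> = (\<Prod>e\<in>all_edges n. if e \<in> H then 1 else (if e \<in> G then p else 1 - p))"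
    using assms by (intro prod.cong) (auto simp: bern_single)
  also have "\<dots> = (\<Prod>e\<in>all_edges n - H. if e \<in> G then p else 1 - p)"
    using finite_all_edges by (simp add: prod.If_cases Diff_eq)
  finally show ?thesis .
qed

lemma pmf_er_split:
  assumes "H \<subseteq> G" "G \<subseteq> all_edges n" "0 \<le> p" "p \<le> 1"
  shows "pmf (erdos_renyi n p) G = (\<Prod>e\<in>all_edges n - H. if e \<in> G then p else 1 - p) * p ^ card H"
proof -
  have "pmf (erdos_renyi n p) G = (\<Prod>e\<in>all_edges n. if e \<in> G then p else 1 - p)"
    using assms by (simp add: pmf_er)
  also have "\<dots> = (\<Prod>e\<in>all_edges n - H. if e \<in> G then p else 1 - p) * (\<Prod>e\<in>H. if e \<in> G then p else 1 - p)"
    using assms finite_all_edges by (intro prod.subset_diff) auto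
  also have "(\<Prod>e\<in>H. if e \<in> G then p else 1 - p) = p ^ card H"
    using assms by (simp add: subset_iff)
  finally show ?thesis .
qed

lemma finite_injections: "finite (injections K n)"
proof -
  have "injections K n \<subseteq> {..<K} \<rightarrow>\<^sub>E {..<n}" by (auto simp: injections_def)
  then show ?thesis by (rule finite_subset) (simp add: finite_PiE)
qed

lemma path_image_sub:
  assumes "f \<in> injections K n"
  shows "path_image K f \<subseteq> all_edges n"
proof
  fix e assume "e \<in> path_image K f"
  then obtain i where i: "Suc i < K" "e = {f i, f (Suc i)}" by (auto simp: path_image_def)
  have inj: "inj_on f {..<K}" and rng: "f \<in> {..<K} \<rightarrow>\<^sub>E {..<n}" using assms by (auto simp: injections_def)
  have ne: "f i \<noteq> f (Suc i)" using inj_onD[OF inj, of i "Suc i"] i(1) by auto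
  have lt: "f i < n" "f (Suc i) < n" using PiE_mem[OF rng, of i] PiE_mem[OF rng, of "Suc i"] i(1) by auto
  show "e \<in> all_edges n"
  proof (cases "f i < f (Suc i)")
    case True then show ?thesis unfolding all_edges_def
      using i lt by (intro CollectI exI[of _ "f i"] exI[of _ "f (Suc i)"]) simp
  next
    case False then have "f (Suc i) < f i" using ne by simp
    then show ?thesis unfolding all_edges_def
      using i lt by (intro CollectI exI[of _ "f (Suc i)"] exI[of _ "f i"]) (simp add: insert_commute)
  qed
qed

lemma finite_path_image: "finite (path_image K f)"
proof -
  have "path_image K f \<subseteq> (\<lambda>i. {f i, f (Suc i)}) ` {..<K}" unfolding path_image_def by force
  then show ?thesis by (rule finite_subset) simp
qed

definition Lr :: "nat \<Rightarrow> real \<Rightarrow> nat \<Rightarrow> nat set set \<Rightarrow> real" where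
  "Lr n p K G = (\<Sum>f\<in>injections K n. if path_image K f \<subseteq> G then 1 / p ^ card (path_image K f) else 0)
                 / card (injections K n)"

lemma prob_er_union_gen:
  assumes "H \<subseteq> all_edges n" "0 < p" "p \<le> 1"
  shows "measure_pmf.prob (erdos_renyi n p) {G0. G0 \<union> H = G}
       = (if H \<subseteq> G then 1 / p ^ card H else 0) * pmf (erdos_renyi n p) G"
proof (cases "G \<subseteq> all_edges n")
  case True
  show ?thesis
  proof (cases "H \<subseteq> G")
    case True
    have a: "measure_pmf.prob (erdos_renyi n p) {G0. G0 \<union> H = G}
       = (\<Prod>e\<in>all_edges n - H. if e \<in> G then p else 1 - p)"
      using True \<open>G \<subseteq> all_edges n\<close> assms by (intro prob_er_union) auto
    have b: "pmf (erdos_renyi n p) G = (\<Prod>e\<in>all_edges n - H. if e \<in> G then p else 1 - p) * p ^ card H"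
      using True \<open>G \<subseteq> all_edges n\<close> assms by (intro pmf_er_split) auto
    have c: "p ^ card H \<noteq> 0" using assms by simp
    show ?thesis unfolding a b using True c by simp
  next
    case False
    then have "{G0. G0 \<union> H = G} = {}" by auto
    then show ?thesis using False by simp
  qed
next
  case False
  have "{G0. G0 \<union> H = G} \<inter> Pow (all_edges n) = {}" using False assms(1) by auto
  then have "measure_pmf.prob (erdos_renyi n p) {G0. G0 \<union> H = G} = 0"
    using prob_er_restrict[of n p "{G0. G0 \<union> H = G}"] by simp
  then show ?thesis using False by (simp add: pmf_er_out)
qed

lemma pmf_P1:
  assumes "injections K n \<noteq> {}" "0 < lam / real n" "lam / real n \<le> 1"
  shows "pmf (P1 n lam K) G = Lr n (lam / real n) K G * pmf (P0 n lam) G"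
proof -
  let ?p = "lam / real n"
  let ?I = "injections K n"
  let ?M = "erdos_renyi n ?p"
  have fin: "finite ?I" by (rule finite_injections)
  have inner: "pmf (bind_pmf (pmf_of_set ?I) (\<lambda>f. return_pmf (G0 \<union> path_image K f))) G
      = (\<Sum>f\<in>?I. indicator {G0. G0 \<union> path_image K f = G} G0 :: real) / real (card ?I)" for G0
  proof -
    have "pmf (bind_pmf (pmf_of_set ?I) (\<lambda>f. return_pmf (G0 \<union> path_image K f))) G
        = (\<Sum>f\<in>?I. pmf (return_pmf (G0 \<union> path_image K f)) G) / real (card ?I)"
      by (simp only: pmf_bind integral_pmf_of_set[OF assms(1) fin])
    also have "\<dots> = (\<Sum>f\<in>?I. indicator {G0. G0 \<union> path_image K f = G} G0 :: real) / real (card ?I)"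
      by (simp only: pmf_return) (simp add: indicator_def)
    finally show ?thesis .
  qed
  have "pmf (P1 n lam K) G = (\<integral>G0. (\<Sum>f\<in>?I. indicator {G0. G0 \<union> path_image K f = G} G0 :: real) / real (card ?I) \<partial>?M)"
    unfolding P1_def by (simp only: pmf_bind[of ?M] inner)
  also have "\<dots> = (\<Sum>f\<in>?I. \<integral>G0. indicator {G0. G0 \<union> path_image K f = G} G0 \<partial>?M) / real (card ?I)"
  proof -
    have int: "integrable (measure_pmf ?M) h" for h :: "_ \<Rightarrow> real"
      by (rule integrable_measure_pmf_finite[OF finite_set_er])
    have s: "(\<integral>G0. (\<Sum>f\<in>?I. indicator {G0. G0 \<union> path_image K f = G} G0 :: real) \<partial>?M)
        = (\<Sum>f\<in>?I. \<integral>G0. indicator {G0. G0 \<union> path_image K f = G} G0 \<partial>?M)"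
      by (rule Bochner_Integration.integral_sum) (rule int)
    show ?thesis
      by (simp only: integral_divide_zero s)
  qed
  also have "\<dots> = (\<Sum>f\<in>?I. measure_pmf.prob ?M {G0. G0 \<union> path_image K f = G}) / real (card ?I)"
    by simp
  also have "\<dots> = (\<Sum>f\<in>?I. (if path_image K f \<subseteq> G then 1 / ?p ^ card (path_image K f) else 0) * pmf ?M G) / real (card ?I)"
    using assms by (intro arg_cong2[where f="(/)"] sum.cong refl prob_er_union_gen path_image_sub) auto
  also have "\<dots> = Lr n ?p K G * pmf (P0 n lam) G"
    unfolding Lr_def P0_def by (simp add: sum_distrib_right)
  finally show ?thesis .
qed

lemma prob_as_sum:
  fixes M :: "'a pmf"
  assumes fin: "finite \<Omega>" and sub: "set_pmf M \<subseteq> \<Omega>"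
  shows "measure_pmf.prob M A = (\<Sum>x\<in>\<Omega>. indicator A x * pmf M x)"
proof -
  have "measure_pmf.prob M A = measure_pmf.prob M (A \<inter> set_pmf M)" by (simp add: measure_Int_set_pmf)
  also have "A \<inter> set_pmf M = (\<Omega> \<inter> A) \<inter> set_pmf M" using sub by blast
  also have "measure_pmf.prob M \<dots> = measure_pmf.prob M (\<Omega> \<inter> A)" by (simp add: measure_Int_set_pmf)
  also have "\<dots> = sum (pmf M) (\<Omega> \<inter> A)" using fin by (simp add: measure_measure_pmf_finite)
  also have "\<dots> = (\<Sum>x\<in>\<Omega>. pmf M x * indicator A x)" using fin
    by (simp add: sum.inter_restrict indicator_def if_distrib cong: if_cong)
  finally show ?thesis by (simp add: mult.commute)
qed

lemma sum_pmf_one: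
  fixes M :: "'a pmf"
  assumes fin: "finite \<Omega>" and sub: "set_pmf M \<subseteq> \<Omega>"
  shows "(\<Sum>x\<in>\<Omega>. pmf M x) = 1"
  using prob_as_sum[OF fin sub, of UNIV] by simp

lemma tv_chi:
  fixes P Q :: "'a pmf" and L :: "'a \<Rightarrow> real"
  assumes fin: "finite \<Omega>" and sub: "set_pmf P \<subseteq> \<Omega>" and dens: "\<And>x. pmf Q x = L x * pmf P x"
  shows "\<bar>measure_pmf.prob Q A - measure_pmf.prob P A\<bar> \<le> sqrt ((\<Sum>x\<in>\<Omega>. (L x)\<^sup>2 * pmf P x) - 1)"
proof -
  have subQ: "set_pmf Q \<subseteq> \<Omega>"
  proof
    fix x assume "x \<in> set_pmf Q"
    then have "pmf Q x \<noteq> 0" by (simp add: set_pmf_iff)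
    then have "pmf P x \<noteq> 0" using dens by auto
    then show "x \<in> \<Omega>" using sub by (auto simp: set_pmf_iff)
  qed
  have sP: "(\<Sum>x\<in>\<Omega>. pmf P x) = 1" by (rule sum_pmf_one[OF fin sub])
  have sL: "(\<Sum>x\<in>\<Omega>. L x * pmf P x) = 1" using sum_pmf_one[OF fin subQ] by (simp add: dens)
  define a where "a x = indicator A x * sqrt (pmf P x)" for x
  define b where "b x = (L x - 1) * sqrt (pmf P x)" for x
  have sq: "sqrt (pmf P x) * sqrt (pmf P x) = pmf P x" for x by simp
  have "measure_pmf.prob Q A - measure_pmf.prob P A
      = (\<Sum>x\<in>\<Omega>. indicator A x * pmf Q x) - (\<Sum>x\<in>\<Omega>. indicator A x * pmf P x)"
    by (simp add: prob_as_sum[OF fin sub] prob_as_sum[OF fin subQ])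
  also have "\<dots> = (\<Sum>x\<in>\<Omega>. a x * b x)"
    unfolding a_def b_def sum_subtractf[symmetric]
    by (intro sum.cong refl) (simp add: dens algebra_simps sq)
  finally have d: "measure_pmf.prob Q A - measure_pmf.prob P A = (\<Sum>x\<in>\<Omega>. a x * b x)" .
  have sa: "(\<Sum>x\<in>\<Omega>. (a x)\<^sup>2) \<le> 1"
  proof -
    have "(\<Sum>x\<in>\<Omega>. (a x)\<^sup>2) \<le> (\<Sum>x\<in>\<Omega>. pmf P x)"
      unfolding a_def by (intro sum_mono) (auto simp: indicator_def power2_eq_square)
    then show ?thesis using sP by simp
  qed
  have sb: "(\<Sum>x\<in>\<Omega>. (b x)\<^sup>2) = (\<Sum>x\<in>\<Omega>. (L x)\<^sup>2 * pmf P x) - 1"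
  proof -
    have "(\<Sum>x\<in>\<Omega>. (b x)\<^sup>2) = (\<Sum>x\<in>\<Omega>. (L x)\<^sup>2 * pmf P x - 2 * (L x * pmf P x) + pmf P x)"
      unfolding b_def by (intro sum.cong refl) (simp add: power2_eq_square algebra_simps sq)
    also have "\<dots> = (\<Sum>x\<in>\<Omega>. (L x)\<^sup>2 * pmf P x) - 2 * (\<Sum>x\<in>\<Omega>. L x * pmf P x) + (\<Sum>x\<in>\<Omega>. pmf P x)"
      by (simp add: sum.distrib sum_subtractf sum_distrib_left)
    finally show ?thesis using sP sL by simp
  qed
  have b0: "0 \<le> (\<Sum>x\<in>\<Omega>. (b x)\<^sup>2)" by (intro sum_nonneg) simp
  have "(\<Sum>x\<in>\<Omega>. a x * b x)\<^sup>2 \<le> (\<Sum>x\<in>\<Omega>. (a x)\<^sup>2) * (\<Sum>x\<in>\<Omega>. (b x)\<^sup>2)"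
    by (rule Cauchy_Schwarz_ineq_sum)
  also have "\<dots> \<le> 1 * (\<Sum>x\<in>\<Omega>. (b x)\<^sup>2)" using sa b0 by (intro mult_right_mono) auto
  finally have "(\<Sum>x\<in>\<Omega>. a x * b x)\<^sup>2 \<le> (\<Sum>x\<in>\<Omega>. (L x)\<^sup>2 * pmf P x) - 1" using sb by simp
  then have "sqrt ((\<Sum>x\<in>\<Omega>. a x * b x)\<^sup>2) \<le> sqrt ((\<Sum>x\<in>\<Omega>. (L x)\<^sup>2 * pmf P x) - 1)"
    by (rule real_sqrt_le_mono)
  then show ?thesis using d by simp
qed

lemma pair_term:
  assumes H1: "H1 \<subseteq> all_edges n" and H2: "H2 \<subseteq> all_edges n" and p: "0 < p" "p \<le> 1"
  shows "(\<Sum>G\<in>Pow (all_edges n). ((if H1 \<subseteq> G then 1 / p ^ card H1 else 0) *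
             (if H2 \<subseteq> G then 1 / p ^ card H2 else 0)) * pmf (erdos_renyi n p) G)
       = (1 / p) ^ card (H1 \<inter> H2)"
proof -
  let ?E = "all_edges n"
  have finE: "finite ?E" by (rule finite_all_edges)
  have f1: "finite H1" "finite H2" using H1 H2 finE finite_subset by auto
  have "(\<Sum>G\<in>Pow ?E. ((if H1 \<subseteq> G then 1 / p ^ card H1 else 0) *
             (if H2 \<subseteq> G then 1 / p ^ card H2 else 0)) * pmf (erdos_renyi n p) G)
      = (\<Sum>G\<in>Pow ?E. (1 / p ^ card H1 * (1 / p ^ card H2)) * (indicator {G. H1 \<union> H2 \<subseteq> G} G * pmf (erdos_renyi n p) G))"
    by (intro sum.cong refl) (auto simp: indicator_def)
  also have "\<dots> = (1 / p ^ card H1 * (1 / p ^ card H2)) * measure_pmf.prob (erdos_renyi n p) {G. H1 \<union> H2 \<subseteq> G}"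
  proof -
    have fP: "finite (Pow ?E)" using finE by simp
    show ?thesis by (simp only: sum_distrib_left[symmetric] prob_as_sum[OF fP set_er])
  qed
  also have "measure_pmf.prob (erdos_renyi n p) {G. H1 \<union> H2 \<subseteq> G} = p ^ card (H1 \<union> H2)"
    using H1 H2 p by (intro prob_er_superset) auto
  also have "1 / p ^ card H1 * (1 / p ^ card H2) * p ^ card (H1 \<union> H2) = (1 / p) ^ card (H1 \<inter> H2)"
  proof -
    have "card H1 + card H2 = card (H1 \<union> H2) + card (H1 \<inter> H2)" using f1 by (rule card_Un_Int)
    then have "p ^ card H1 * p ^ card H2 = p ^ card (H1 \<union> H2) * p ^ card (H1 \<inter> H2)"
      by (metis power_add)
    moreover have "p ^ card (H1 \<union> H2) \<noteq> 0" using p by simp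
    ultimately show ?thesis using p by (simp add: field_simps power_one_over)
  qed
  finally show ?thesis .
qed

lemma second_moment:
  assumes p: "0 < p" "p \<le> 1"
  shows "(\<Sum>G\<in>Pow (all_edges n). (Lr n p K G)\<^sup>2 * pmf (erdos_renyi n p) G)
       = (\<Sum>f\<in>injections K n. \<Sum>g\<in>injections K n. (1 / p) ^ card (path_image K f \<inter> path_image K g))
         / (real (card (injections K n)))\<^sup>2"
proof -
  let ?I = "injections K n" and ?E = "all_edges n" and ?M = "erdos_renyi n p"
  define a where "a = (\<lambda>f G. if path_image K f \<subseteq> G then 1 / p ^ card (path_image K f) else (0::real))"
  define N where "N = real (card ?I)"
  have L: "Lr n p K G = (\<Sum>f\<in>?I. a f G) / N" for G by (simp add: Lr_def a_def N_def)
  have eq1: "(Lr n p K G)\<^sup>2 * pmf ?M G = (\<Sum>f\<in>?I. \<Sum>g\<in>?I. (a f G * a g G) * pmf ?M G) / N\<^sup>2" for G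
  proof -
    have "(\<Sum>f\<in>?I. a f G)\<^sup>2 = (\<Sum>f\<in>?I. \<Sum>g\<in>?I. a f G * a g G)" by (simp add: power2_eq_square sum_product)
    then show ?thesis unfolding L power_divide by (simp add: sum_distrib_right)
  qed
  have "(\<Sum>G\<in>Pow ?E. (Lr n p K G)\<^sup>2 * pmf ?M G) = (\<Sum>G\<in>Pow ?E. \<Sum>f\<in>?I. \<Sum>g\<in>?I. (a f G * a g G) * pmf ?M G) / N\<^sup>2"
    unfolding eq1 by (rule sum_divide_distrib[symmetric])
  also have "(\<Sum>G\<in>Pow ?E. \<Sum>f\<in>?I. \<Sum>g\<in>?I. (a f G * a g G) * pmf ?M G)
           = (\<Sum>f\<in>?I. \<Sum>G\<in>Pow ?E. \<Sum>g\<in>?I. (a f G * a g G) * pmf ?M G)" by (rule sum.swap)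
  also have "\<dots> = (\<Sum>f\<in>?I. \<Sum>g\<in>?I. \<Sum>G\<in>Pow ?E. (a f G * a g G) * pmf ?M G)"
    by (intro sum.cong refl) (rule sum.swap)
  also have "\<dots> = (\<Sum>f\<in>?I. \<Sum>g\<in>?I. (1 / p) ^ card (path_image K f \<inter> path_image K g))"
    unfolding a_def using p by (intro sum.cong refl pair_term path_image_sub) auto
  finally show ?thesis by (simp add: N_def)
qed

fun pe :: "nat list \<Rightarrow> nat set set" where
  "pe (x # y # xs) = insert {x, y} (pe (y # xs))"
| "pe _ = {}"

fun wt :: "nat set set \<Rightarrow> real \<Rightarrow> nat list \<Rightarrow> real" where
  "wt E0 c (x # y # xs) = (if {x, y} \<in> E0 then c else 1) * wt E0 c (y # xs)"
| "wt E0 c _ = 1"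

definition edge :: "nat set set \<Rightarrow> nat \<Rightarrow> nat list \<Rightarrow> bool" where
  "edge E0 x xs = (case xs of [] \<Rightarrow> False | y # _ \<Rightarrow> {x, y} \<in> E0)"

fun nbw :: "nat set set \<Rightarrow> nat set \<Rightarrow> nat list \<Rightarrow> real" where
  "nbw E0 V0 [] = 0"
| "nbw E0 V0 (x # xs) = (if edge E0 x xs then 1 else if x \<in> V0 then 2 else 0)"

definition Dl :: "nat \<Rightarrow> nat \<Rightarrow> nat list set" where
  "Dl n m = {xs. length xs = m \<and> distinct xs \<and> set xs \<subseteq> {..<n}}"

lemma wt_Cons: "wt E0 c (x # xs) = (if edge E0 x xs then c else 1) * wt E0 c xs"
  by (cases xs) (auto simp: edge_def)

lemma wt_nonneg: "0 \<le> c \<Longrightarrow> 0 \<le> wt E0 c xs"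
  by (induction E0 c xs rule: wt.induct) auto

lemma pe_nth: "pe xs = {{xs ! i, xs ! Suc i} | i. Suc i < length xs}"
proof (induction xs rule: pe.induct)
  case (1 x y xs)
  show ?case
  proof
    show "pe (x # y # xs) \<subseteq> {{(x # y # xs) ! i, (x # y # xs) ! Suc i} |i. Suc i < length (x # y # xs)}"
    proof
      fix e assume "e \<in> pe (x # y # xs)"
      then have "e = {x, y} \<or> e \<in> pe (y # xs)" by simp
      then show "e \<in> {{(x # y # xs) ! i, (x # y # xs) ! Suc i} |i. Suc i < length (x # y # xs)}"
      proof
        assume "e = {x, y}" then show ?thesis by (intro CollectI exI[of _ 0]) simp
      next
        assume "e \<in> pe (y # xs)"
        then obtain i where "Suc i < length (y # xs)" "e = {(y # xs) ! i, (y # xs) ! Suc i}"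
          using "1.IH" by auto
        then show ?thesis by (intro CollectI exI[of _ "Suc i"]) simp
      qed
    qed
  next
    show "{{(x # y # xs) ! i, (x # y # xs) ! Suc i} |i. Suc i < length (x # y # xs)} \<subseteq> pe (x # y # xs)"
    proof
      fix e assume "e \<in> {{(x # y # xs) ! i, (x # y # xs) ! Suc i} |i. Suc i < length (x # y # xs)}"
      then obtain i where i: "Suc i < length (x # y # xs)" "e = {(x # y # xs) ! i, (x # y # xs) ! Suc i}" by blast
      show "e \<in> pe (x # y # xs)"
      proof (cases i)
        case 0 then show ?thesis using i by simp
      next
        case (Suc j)
        then have "e \<in> {{(y # xs) ! i, (y # xs) ! Suc i} |i. Suc i < length (y # xs)}"
          using i by auto
        then show ?thesis using "1.IH" by simp
      qed
    qed
  qed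
qed auto

lemma path_image_pe: "path_image K f = pe (map f [0..<K])"
  unfolding pe_nth path_image_def by (intro Collect_cong ex_cong1) (auto simp del: upt_Suc)

lemma finite_pe: "finite (pe xs)"
  by (induction xs rule: pe.induct) auto

lemma pow_le_wt:
  assumes "1 \<le> c"
  shows "c ^ card (pe xs \<inter> E0) \<le> wt E0 c xs"
proof (induction xs rule: pe.induct)
  case (1 x y xs)
  let ?S = "pe (y # xs) \<inter> E0"
  have fS: "finite ?S" using finite_pe by auto
  have w0: "0 \<le> wt E0 c (y # xs)" using assms by (intro wt_nonneg) simp
  show ?case
  proof (cases "{x, y} \<in> E0")
    case True
    have "pe (x # y # xs) \<inter> E0 = insert {x, y} ?S" using True by auto
    then have "card (pe (x # y # xs) \<inter> E0) \<le> Suc (card ?S)" using fS by (simp add: card_insert_if)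
    then have "c ^ card (pe (x # y # xs) \<inter> E0) \<le> c ^ Suc (card ?S)"
      using assms by (intro power_increasing) auto
    also have "\<dots> = c * c ^ card ?S" by simp
    also have "\<dots> \<le> c * wt E0 c (y # xs)" using "1" assms by (intro mult_left_mono) auto
    finally show ?thesis using True by simp
  next
    case False
    have "pe (x # y # xs) \<inter> E0 = ?S" using False by auto
    then show ?thesis using False "1" by simp
  qed
qed auto

lemma finite_Dl: "finite (Dl n m)"
proof -
  have "Dl n m \<subseteq> {xs. set xs \<subseteq> {..<n} \<and> length xs = m}" by (auto simp: Dl_def)
  then show ?thesis by (rule finite_subset) (intro finite_lists_length_eq, simp)
qed

lemma Dl_0: "Dl n 0 = {[]}"
  by (auto simp: Dl_def)

lemma Dl_Suc: "Dl n (Suc m) = (\<lambda>(xs, x). x # xs) ` (SIGMA xs:Dl n m. {..<n} - set xs)"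
proof
  show "Dl n (Suc m) \<subseteq> (\<lambda>(xs, x). x # xs) ` (SIGMA xs:Dl n m. {..<n} - set xs)"
  proof
    fix ys assume ys: "ys \<in> Dl n (Suc m)"
    then obtain x xs where e: "ys = x # xs" by (cases ys) (auto simp: Dl_def)
    then have "(xs, x) \<in> (SIGMA xs:Dl n m. {..<n} - set xs)" using ys by (auto simp: Dl_def)
    then show "ys \<in> (\<lambda>(xs, x). x # xs) ` (SIGMA xs:Dl n m. {..<n} - set xs)"
      by (rule rev_image_eqI) (simp add: e)
  qed
next
  show "(\<lambda>(xs, x). x # xs) ` (SIGMA xs:Dl n m. {..<n} - set xs) \<subseteq> Dl n (Suc m)"
    by (auto simp: Dl_def)
qed

lemma sum_Dl_Suc:
  "sum g (Dl n (Suc m)) = (\<Sum>xs\<in>Dl n m. \<Sum>x\<in>{..<n} - set xs. g (x # xs))"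
proof -
  have inj: "inj_on (\<lambda>(xs, x). x # xs) A" for A :: "(nat list \<times> nat) set"
    by (auto intro: inj_onI)
  have "sum g (Dl n (Suc m)) = sum (g \<circ> (\<lambda>(xs, x). x # xs)) (SIGMA xs:Dl n m. {..<n} - set xs)"
    unfolding Dl_Suc by (rule sum.reindex[OF inj])
  also have "\<dots> = (\<Sum>xs\<in>Dl n m. \<Sum>x\<in>{..<n} - set xs. g (x # xs))"
  proof -
    have e: "(g \<circ> (\<lambda>(xs, x). x # xs)) = (\<lambda>(xs, x). g (x # xs))" by (auto simp: fun_eq_iff)
    show ?thesis unfolding e by (rule sum.Sigma[symmetric]) (simp_all add: finite_Dl)
  qed
  finally show ?thesis .
qed

lemma card_avail:
  assumes "xs \<in> Dl n m"
  shows "card ({..<n} - set xs) = n - m"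
proof -
  have "set xs \<subseteq> {..<n}" "distinct xs" "length xs = m" using assms by (auto simp: Dl_def)
  then show ?thesis by (simp add: card_Diff_subset distinct_card)
qed

lemma card_Dl_Suc: "card (Dl n (Suc m)) = (n - m) * card (Dl n m)"
proof -
  have "card (Dl n (Suc m)) = (\<Sum>ys\<in>Dl n (Suc m). 1)" by simp
  also have "\<dots> = (\<Sum>xs\<in>Dl n m. \<Sum>x\<in>{..<n} - set xs. 1)" by (rule sum_Dl_Suc)
  also have "\<dots> = (\<Sum>xs\<in>Dl n m. n - m)" by (intro sum.cong refl) (simp add: card_avail)
  finally show ?thesis by simp
qed

definition unmap :: "nat \<Rightarrow> nat list \<Rightarrow> nat \<Rightarrow> nat" where
  "unmap K xs = (\<lambda>i. if i < K then xs ! i else undefined)"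

lemma bij_inj_Dl: "bij_betw (\<lambda>f. map f [0..<K]) (injections K n) (Dl n K)"
proof (rule bij_betw_byWitness[where f' = "unmap K"])
  show "\<forall>f\<in>injections K n. unmap K (map f [0..<K]) = f"
  proof
    fix f assume "f \<in> injections K n"
    then have "f \<in> {..<K} \<rightarrow>\<^sub>E {..<n}" by (simp add: injections_def)
    show "unmap K (map f [0..<K]) = f"
    proof
      fix i show "unmap K (map f [0..<K]) i = f i"
      proof (cases "i < K")
        case True then show ?thesis by (simp add: unmap_def)
      next
        case False then show ?thesis using PiE_arb[OF \<open>f \<in> {..<K} \<rightarrow>\<^sub>E {..<n}\<close>, of i]
          by (simp add: unmap_def)
      qed
    qed
  qed
  show "\<forall>xs\<in>Dl n K. map (unmap K xs) [0..<K] = xs"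
  proof
    fix xs assume "xs \<in> Dl n K"
    then have l: "length xs = K" by (simp add: Dl_def)
    show "map (unmap K xs) [0..<K] = xs"
      by (rule nth_equalityI) (simp_all add: l unmap_def)
  qed
  show "(\<lambda>f. map f [0..<K]) ` injections K n \<subseteq> Dl n K"
  proof
    fix ys assume "ys \<in> (\<lambda>f. map f [0..<K]) ` injections K n"
    then obtain f where f: "f \<in> injections K n" "ys = map f [0..<K]" by blast
    have inj: "inj_on f {..<K}" and r: "f \<in> {..<K} \<rightarrow>\<^sub>E {..<n}" using f by (auto simp: injections_def)
    have "distinct ys" using inj f(2) by (simp add: distinct_map atLeast0LessThan)
    moreover have "set ys \<subseteq> {..<n}"
    proof
      fix y assume "y \<in> set ys"
      then obtain i where "i < K" "y = f i" using f(2) by auto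
      then show "y \<in> {..<n}" using PiE_mem[OF r, of i] by simp
    qed
    ultimately show "ys \<in> Dl n K" using f(2) by (simp add: Dl_def)
  qed
  show "unmap K ` Dl n K \<subseteq> injections K n"
  proof
    fix g assume "g \<in> unmap K ` Dl n K"
    then obtain xs where xs: "xs \<in> Dl n K" "g = unmap K xs" by blast
    have l: "length xs = K" and d: "distinct xs" and s: "set xs \<subseteq> {..<n}" using xs by (auto simp: Dl_def)
    have "g \<in> {..<K} \<rightarrow>\<^sub>E {..<n}"
    proof (rule PiE_I)
      fix i assume "i \<in> {..<K}"
      then have "xs ! i \<in> set xs" using l by simp
      then show "g i \<in> {..<n}" using s xs(2) \<open>i \<in> {..<K}\<close> by (auto simp: unmap_def)
    next
      fix i assume "i \<notin> {..<K}"
      then show "g i = undefined" using xs(2) by (simp add: unmap_def)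
    qed
    moreover have "inj_on g {..<K}"
    proof (rule inj_onI)
      fix i j assume "i \<in> {..<K}" "j \<in> {..<K}" "g i = g j"
      then have "xs ! i = xs ! j" "i < length xs" "j < length xs" using xs(2) l by (auto simp: unmap_def)
      then show "i = j" using d by (simp add: nth_eq_iff_index_eq)
    qed
    ultimately show "g \<in> injections K n" by (simp add: injections_def)
  qed
qed

lemma sum_injections:
  "(\<Sum>f\<in>injections K n. h (map f [0..<K])) = (\<Sum>xs\<in>Dl n K. h xs)"
  using sum.reindex_bij_betw[OF bij_inj_Dl, of h] by simp

lemma card_injections: "card (injections K n) = card (Dl n K)"
  by (rule bij_betw_same_card[OF bij_inj_Dl])

lemma sum_if_const:
  assumes "finite X"
  shows "(\<Sum>x\<in>X. if P x then a else 0) = a * real (card {x\<in>X. P x})"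
  using sum.inter_filter[OF assms, of "\<lambda>_. a" P, symmetric] by simp

locale pathgraph =
  fixes E0 :: "nat set set" and V0 :: "nat set" and K :: nat and c :: real
  assumes hE: "\<And>x y. {x, y} \<in> E0 \<Longrightarrow> x \<in> V0"
    and hNf: "\<And>y. finite {x. {x, y} \<in> E0}"
    and hN: "\<And>y. card {x. {x, y} \<in> E0} \<le> 2"
    and hVf: "finite V0" and hV: "card V0 \<le> K"
    and hc: "1 \<le> c"
begin

lemma nbw_nonneg: "0 \<le> nbw E0 V0 xs"
  by (cases xs) auto

lemma nb_count:
  assumes "xs \<in> Dl n m"
  shows "real (card {x \<in> {..<n} - set xs. edge E0 x xs}) \<le> nbw E0 V0 xs"
proof (cases xs)
  case Nil then show ?thesis by (simp add: edge_def)
next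
  case (Cons y r)
  let ?N = "{x. {x, y} \<in> E0}"
  have sub: "{x \<in> {..<n} - set xs. edge E0 x xs} \<subseteq> ?N - set xs"
    using Cons by (auto simp: edge_def)
  have fin: "finite (?N - set xs)" using hNf by simp
  have c1: "card {x \<in> {..<n} - set xs. edge E0 x xs} \<le> card (?N - set xs)"
    by (rule card_mono[OF fin sub])
  show ?thesis
  proof (cases "edge E0 y r")
    case True
    then obtain z r' where r: "r = z # r'" "{y, z} \<in> E0" by (cases r) (auto simp: edge_def)
    have zN: "z \<in> ?N" using r(2) by (simp add: insert_commute)
    have "?N - set xs \<subseteq> ?N - {z}" using Cons r by auto
    then have "card (?N - set xs) \<le> card (?N - {z})" using hNf by (intro card_mono) auto
    also have "\<dots> = card ?N - 1" using zN hNf by simp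
    also have "\<dots> \<le> 1" using hN[of y] by simp
    finally show ?thesis using c1 True Cons by simp
  next
    case False
    show ?thesis
    proof (cases "y \<in> V0")
      case True
      have "card (?N - set xs) \<le> card ?N" using hNf by (intro card_mono) auto
      then show ?thesis using c1 hN[of y] True False Cons by simp
    next
      case yV: False
      have "?N = {}"
      proof (rule ccontr)
        assume "?N \<noteq> {}"
        then obtain x where "{x, y} \<in> E0" by auto
        then have "{y, x} \<in> E0" by (simp add: insert_commute)
        then show False using hE yV by blast
      qed
      then have "card {x \<in> {..<n} - set xs. edge E0 x xs} = 0" using c1 by simp
      then show ?thesis by (simp only: of_nat_0 nbw_nonneg)
    qed
  qed
qed

lemma step_S:
  assumes "xs \<in> Dl n m"
  shows "(\<Sum>x\<in>{..<n} - set xs. wt E0 c (x # xs))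
         \<le> real (n - m) * wt E0 c xs + c * nbw E0 V0 xs * wt E0 c xs"
proof -
  let ?X = "{..<n} - set xs" and ?w = "wt E0 c xs"
  have w0: "0 \<le> ?w" using hc by (intro wt_nonneg) simp
  have fX: "finite ?X" by simp
  have "(\<Sum>x\<in>?X. wt E0 c (x # xs)) = (\<Sum>x\<in>?X. (if edge E0 x xs then c else 1) * ?w)"
    by (simp add: wt_Cons)
  also have "\<dots> \<le> (\<Sum>x\<in>?X. ?w + (if edge E0 x xs then c else 0) * ?w)"
    using hc w0 by (intro sum_mono) (auto simp: algebra_simps)
  also have "\<dots> = real (card ?X) * ?w + (\<Sum>x\<in>?X. if edge E0 x xs then c else 0) * ?w"
    by (simp add: sum.distrib sum_distrib_right)
  also have "\<dots> = real (n - m) * ?w + c * real (card {x\<in>?X. edge E0 x xs}) * ?w"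
    using card_avail[OF assms] by (simp add: sum_if_const[OF fX])
  also have "\<dots> \<le> real (n - m) * ?w + c * nbw E0 V0 xs * ?w"
    using nb_count[OF assms] hc w0 by (intro add_left_mono mult_right_mono mult_left_mono) auto
  finally show ?thesis .
qed

lemma step_T:
  assumes "xs \<in> Dl n m"
  shows "(\<Sum>x\<in>{..<n} - set xs. nbw E0 V0 (x # xs) * wt E0 c (x # xs))
         \<le> 2 * real K * wt E0 c xs + c * nbw E0 V0 xs * wt E0 c xs"
proof -
  let ?X = "{..<n} - set xs" and ?w = "wt E0 c xs"
  have w0: "0 \<le> ?w" using hc by (intro wt_nonneg) simp
  have fX: "finite ?X" by simp
  have "(\<Sum>x\<in>?X. nbw E0 V0 (x # xs) * wt E0 c (x # xs))
      \<le> (\<Sum>x\<in>?X. (if edge E0 x xs then c else 0) * ?w + (if x \<in> V0 then 2 else 0) * ?w)"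
    using hc w0 by (intro sum_mono) (auto simp: wt_Cons)
  also have "\<dots> = (\<Sum>x\<in>?X. if edge E0 x xs then c else 0) * ?w + (\<Sum>x\<in>?X. if x \<in> V0 then 2 else 0) * ?w"
    by (simp add: sum.distrib sum_distrib_right)
  also have "\<dots> = c * real (card {x\<in>?X. edge E0 x xs}) * ?w + 2 * real (card {x\<in>?X. x \<in> V0}) * ?w"
    by (simp add: sum_if_const[OF fX])
  also have "\<dots> \<le> c * nbw E0 V0 xs * ?w + 2 * real K * ?w"
  proof -
    have "card {x\<in>?X. x \<in> V0} \<le> card V0" using hVf by (intro card_mono) auto
    then have "real (card {x\<in>?X. x \<in> V0}) \<le> real K" using hV by simp
    then show ?thesis
      using nb_count[OF assms] hc w0 by (intro add_mono mult_right_mono mult_left_mono) auto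
  qed
  finally show ?thesis by simp
qed

definition Ssum :: "nat \<Rightarrow> nat \<Rightarrow> real" where
  "Ssum n m = (\<Sum>xs\<in>Dl n m. wt E0 c xs)"

definition Tsum :: "nat \<Rightarrow> nat \<Rightarrow> real" where
  "Tsum n m = (\<Sum>xs\<in>Dl n m. nbw E0 V0 xs * wt E0 c xs)"

lemma Ssum_0: "Ssum n 0 = 1" by (simp add: Ssum_def Dl_0)
lemma Tsum_0: "Tsum n 0 = 0" by (simp add: Tsum_def Dl_0)

lemma Ssum_nonneg: "0 \<le> Ssum n m"
  unfolding Ssum_def using hc by (intro sum_nonneg wt_nonneg) simp

lemma Tsum_nonneg: "0 \<le> Tsum n m"
  unfolding Tsum_def using hc by (intro sum_nonneg mult_nonneg_nonneg wt_nonneg nbw_nonneg) simp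

lemma Ssum_Suc: "Ssum n (Suc m) \<le> real (n - m) * Ssum n m + c * Tsum n m"
proof -
  have "Ssum n (Suc m) = (\<Sum>xs\<in>Dl n m. \<Sum>x\<in>{..<n} - set xs. wt E0 c (x # xs))"
    unfolding Ssum_def by (rule sum_Dl_Suc)
  also have "\<dots> \<le> (\<Sum>xs\<in>Dl n m. real (n - m) * wt E0 c xs + c * (nbw E0 V0 xs * wt E0 c xs))"
    using step_S by (intro sum_mono) (simp add: mult.assoc)
  also have "\<dots> = real (n - m) * Ssum n m + c * Tsum n m"
    by (simp add: Ssum_def Tsum_def sum.distrib sum_distrib_left)
  finally show ?thesis .
qed

lemma Tsum_Suc: "Tsum n (Suc m) \<le> 2 * real K * Ssum n m + c * Tsum n m"
proof -
  have "Tsum n (Suc m) = (\<Sum>xs\<in>Dl n m. \<Sum>x\<in>{..<n} - set xs. nbw E0 V0 (x # xs) * wt E0 c (x # xs))"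
    unfolding Tsum_def by (rule sum_Dl_Suc)
  also have "\<dots> \<le> (\<Sum>xs\<in>Dl n m. 2 * real K * wt E0 c xs + c * (nbw E0 V0 xs * wt E0 c xs))"
    using step_T by (intro sum_mono) (simp add: mult.assoc)
  also have "\<dots> = 2 * real K * Ssum n m + c * Tsum n m"
    by (simp add: Ssum_def Tsum_def sum.distrib sum_distrib_left)
  finally show ?thesis .
qed

end

lemma geom_Suc: "(\<Sum>j<Suc m. (\<rho>::real) ^ j) = 1 + \<rho> * (\<Sum>j<m. \<rho> ^ j)"
  by (subst sum.lessThan_Suc_shift) (simp add: sum_distrib_left)

lemma geom_mono: "0 \<le> (\<rho>::real) \<Longrightarrow> m \<le> K \<Longrightarrow> (\<Sum>j<m. \<rho> ^ j) \<le> (\<Sum>j<K. \<rho> ^ j)"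
  by (intro sum_mono2) auto

lemma rec_bound:
  fixes S T F a :: "nat \<Rightarrow> real" and b c e \<rho> :: real and K :: nat
  defines "R \<equiv> (\<Sum>j<K. \<rho> ^ j)"
  defines "\<sigma> \<equiv> 1 + e * \<rho> * R"
  assumes S0: "S 0 \<le> F 0" and T0: "T 0 \<le> 0"
    and FS: "\<And>m. m < K \<Longrightarrow> F (Suc m) = a m * F m"
    and Fnn: "\<And>m. 0 \<le> F m" and ann: "\<And>m. m < K \<Longrightarrow> 0 \<le> a m"
    and SS: "\<And>m. m < K \<Longrightarrow> S (Suc m) \<le> a m * S m + c * T m"
    and TS: "\<And>m. m < K \<Longrightarrow> T (Suc m) \<le> b * S m + c * T m"
    and hb: "\<And>m. m < K \<Longrightarrow> b \<le> e * a m"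
    and hc: "\<And>m. m < K \<Longrightarrow> c \<le> \<rho> * a m"
    and e0: "0 \<le> e" and r0: "0 \<le> \<rho>" and c0: "0 \<le> c" and b0: "0 \<le> b"
  shows "S K \<le> \<sigma> ^ K * F K"
proof -
  have R0: "0 \<le> R" unfolding R_def using r0 by (intro sum_nonneg) simp
  have s1: "1 \<le> \<sigma>" unfolding \<sigma>_def using e0 r0 R0 by simp
  have inv: "S m \<le> \<sigma> ^ m * F m \<and> T m \<le> e * (\<Sum>j<m. \<rho> ^ j) * \<sigma> ^ m * F m" if "m \<le> K" for m
    using that
  proof (induction m)
    case 0 then show ?case using S0 T0 by simp
  next
    case (Suc m)
    then have mK: "m < K" by simp
    from Suc have IH1: "S m \<le> \<sigma> ^ m * F m" and IH2: "T m \<le> e * (\<Sum>j<m. \<rho> ^ j) * \<sigma> ^ m * F m" by auto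
    let ?Rm = "\<Sum>j<m. \<rho> ^ j"
    have Rm0: "0 \<le> ?Rm" using r0 by (intro sum_nonneg) simp
    have RmR: "?Rm \<le> R" unfolding R_def using r0 mK by (intro geom_mono) auto
    have pw: "0 \<le> \<sigma> ^ m" using s1 by simp
    have F0: "0 \<le> F m" by (rule Fnn)
    have a0: "0 \<le> a m" using ann mK by simp
    have X: "0 \<le> e * \<sigma> ^ m * F m" using e0 pw F0 by simp
    have cR: "c * ?Rm \<le> \<rho> * a m * R"
    proof -
      have "c * ?Rm \<le> (\<rho> * a m) * ?Rm" using hc[OF mK] Rm0 by (rule mult_right_mono)
      also have "\<dots> \<le> (\<rho> * a m) * R" using RmR r0 a0 by (intro mult_left_mono) auto
      finally show ?thesis .
    qed
    have cR': "c * ?Rm \<le> \<rho> * a m * ?Rm"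
      using hc[OF mK] Rm0 by (rule mult_right_mono)
    have A: "S (Suc m) \<le> \<sigma> ^ Suc m * F (Suc m)"
    proof -
      have "S (Suc m) \<le> a m * S m + c * T m" using SS[OF mK] .
      also have "\<dots> \<le> a m * (\<sigma> ^ m * F m) + c * (e * ?Rm * \<sigma> ^ m * F m)"
        using IH1 IH2 a0 c0 by (intro add_mono mult_left_mono) auto
      also have "\<dots> = a m * (\<sigma> ^ m * F m) + (c * ?Rm) * (e * \<sigma> ^ m * F m)" by (simp add: algebra_simps)
      also have "\<dots> \<le> a m * (\<sigma> ^ m * F m) + (\<rho> * a m * R) * (e * \<sigma> ^ m * F m)"
        using cR X by (intro add_left_mono mult_right_mono) auto
      also have "\<dots> = \<sigma> ^ Suc m * F (Suc m)"
        unfolding FS[OF mK] \<sigma>_def by (simp add: algebra_simps)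
      finally show ?thesis .
    qed
    have B: "T (Suc m) \<le> e * (\<Sum>j<Suc m. \<rho> ^ j) * \<sigma> ^ Suc m * F (Suc m)"
    proof -
      have "T (Suc m) \<le> b * S m + c * T m" using TS[OF mK] .
      also have "\<dots> \<le> b * (\<sigma> ^ m * F m) + c * (e * ?Rm * \<sigma> ^ m * F m)"
        using IH1 IH2 b0 c0 by (intro add_mono mult_left_mono) auto
      also have "\<dots> = b * (\<sigma> ^ m * F m) + (c * ?Rm) * (e * \<sigma> ^ m * F m)" by (simp add: algebra_simps)
      also have "\<dots> \<le> (e * a m) * (\<sigma> ^ m * F m) + (\<rho> * a m * ?Rm) * (e * \<sigma> ^ m * F m)"
      proof (rule add_mono)
        show "b * (\<sigma> ^ m * F m) \<le> (e * a m) * (\<sigma> ^ m * F m)"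
          by (rule mult_right_mono[OF hb[OF mK]]) (simp add: pw F0)
        show "(c * ?Rm) * (e * \<sigma> ^ m * F m) \<le> (\<rho> * a m * ?Rm) * (e * \<sigma> ^ m * F m)"
          by (rule mult_right_mono[OF cR' X])
      qed
      also have "\<dots> = e * (1 + \<rho> * ?Rm) * \<sigma> ^ m * (a m * F m)" by (simp add: algebra_simps)
      also have "\<dots> = e * (\<Sum>j<Suc m. \<rho> ^ j) * \<sigma> ^ m * F (Suc m)"
        by (simp only: geom_Suc FS[OF mK])
      also have "\<dots> \<le> e * (\<Sum>j<Suc m. \<rho> ^ j) * \<sigma> ^ Suc m * F (Suc m)"
      proof -
        have "0 \<le> e * (\<Sum>j<Suc m. \<rho> ^ j)" using e0 r0 by (intro mult_nonneg_nonneg sum_nonneg) auto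
        moreover have "\<sigma> ^ m \<le> \<sigma> ^ Suc m" using s1 by (intro power_increasing) auto
        ultimately show ?thesis using Fnn[of "Suc m"]
          by (intro mult_right_mono mult_left_mono) auto
      qed
      finally show ?thesis .
    qed
    show ?case using A B by simp
  qed
  then show ?thesis by simp
qed

lemma pow_le_exp: "0 \<le> x \<Longrightarrow> (1 + x) ^ K \<le> exp (real K * x)"
proof -
  assume "0 \<le> x"
  have "(1 + x) ^ K \<le> (exp x) ^ K" using \<open>0 \<le> x\<close> by (intro power_mono) (auto simp: exp_ge_add_one_self)
  also have "\<dots> = exp (real K * x)" by (simp add: exp_of_nat_mult)
  finally show ?thesis .
qed

lemma (in pathgraph) Ssum_bound:
  assumes Kn: "K < n"
  shows "Ssum n K \<le> (1 + (2 * real K / (real n - real K)) * (c / (real n - real K))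
                        * (\<Sum>j<K. (c / (real n - real K)) ^ j)) ^ K * real (card (Dl n K))"
proof -
  have pos: "0 < real n - real K" using Kn by simp
  show ?thesis
  proof (rule rec_bound[where T = "Tsum n" and a = "\<lambda>m. real (n - m)" and b = "2 * real K" and c = c])
    show "Ssum n 0 \<le> real (card (Dl n 0))" by (simp add: Ssum_0 Dl_0)
    show "Tsum n 0 \<le> 0" by (simp add: Tsum_0)
    show "real (card (Dl n (Suc m))) = real (n - m) * real (card (Dl n m))" for m
      by (simp add: card_Dl_Suc)
    show "0 \<le> real (card (Dl n m))" for m by simp
    show "0 \<le> real (n - m)" for m by simp
    show "Ssum n (Suc m) \<le> real (n - m) * Ssum n m + c * Tsum n m" for m by (rule Ssum_Suc)
    show "Tsum n (Suc m) \<le> 2 * real K * Ssum n m + c * Tsum n m" for m by (rule Tsum_Suc)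
    show "2 * real K \<le> 2 * real K / (real n - real K) * real (n - m)" if "m < K" for m
    proof -
      have "real n - real K \<le> real (n - m)" using that Kn by simp
      then have "2 * real K * (real n - real K) \<le> 2 * real K * real (n - m)"
        by (intro mult_left_mono) auto
      then show ?thesis using pos by (simp add: field_simps)
    qed
    show "c \<le> c / (real n - real K) * real (n - m)" if "m < K" for m
    proof -
      have "real n - real K \<le> real (n - m)" using that Kn by simp
      then have "c * (real n - real K) \<le> c * real (n - m)"
        using hc by (intro mult_left_mono) auto
      then show ?thesis using pos by (simp add: field_simps)
    qed
    show "0 \<le> 2 * real K / (real n - real K)" using pos by simp
    show "0 \<le> c / (real n - real K)" using pos hc by simp
    show "0 \<le> c" using hc by simp
    show "0 \<le> 2 * real K" by simp
  qed
qed

lemma pathgraph_inst: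
  assumes g: "g \<in> injections K n" and c: "1 \<le> c"
  shows "pathgraph (path_image K g) (g ` {..<K}) K c"
proof -
  have inj: "inj_on g {..<K}" using g by (simp add: injections_def)
  have pe: "{x, y} \<in> path_image K g \<longleftrightarrow> (\<exists>i. Suc i < K \<and> ((x = g i \<and> y = g (Suc i)) \<or> (x = g (Suc i) \<and> y = g i)))" for x y
    unfolding path_image_def by (auto simp: doubleton_eq_iff)
  have N: "{x. {x, y} \<in> path_image K g} \<subseteq> (if y \<in> g ` {..<K} then {g (inv_into {..<K} g y - 1), g (Suc (inv_into {..<K} g y))} else {})" for y
  proof
    fix x assume "x \<in> {x. {x, y} \<in> path_image K g}"
    then obtain i where i: "Suc i < K" "(x = g i \<and> y = g (Suc i)) \<or> (x = g (Suc i) \<and> y = g i)"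
      using pe by auto
    then have yim: "y \<in> g ` {..<K}" by auto
    show "x \<in> (if y \<in> g ` {..<K} then {g (inv_into {..<K} g y - 1), g (Suc (inv_into {..<K} g y))} else {})"
      using i(2)
    proof
      assume h: "x = g i \<and> y = g (Suc i)"
      have "inv_into {..<K} g y = Suc i" using h i(1) inj by (simp add: inv_into_f_f)
      then show ?thesis using yim h by simp
    next
      assume h: "x = g (Suc i) \<and> y = g i"
      have "inv_into {..<K} g y = i" using h i(1) inj by (simp add: inv_into_f_f)
      then show ?thesis using yim h by simp
    qed
  qed
  show ?thesis
  proof
    show "x \<in> g ` {..<K}" if "{x, y} \<in> path_image K g" for x y
      using that pe[of x y] by auto
    show "finite {x. {x, y} \<in> path_image K g}" for y
      using N[of y] by (rule finite_subset) simp
    show "card {x. {x, y} \<in> path_image K g} \<le> 2" for y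
    proof -
      let ?B = "(if y \<in> g ` {..<K} then {g (inv_into {..<K} g y - 1), g (Suc (inv_into {..<K} g y))} else {})"
      have "card {x. {x, y} \<in> path_image K g} \<le> card ?B"
        using N[of y] by (intro card_mono) auto
      also have "\<dots> \<le> 2" by (auto simp: card_insert_if)
      finally show ?thesis .
    qed
    show "finite (g ` {..<K})" by simp
    show "card (g ` {..<K}) \<le> K" using card_image_le[of "{..<K}" g] by simp
    show "1 \<le> c" by (rule c)
  qed
qed

lemma overlap_bound:
  assumes g: "g \<in> injections K n" and c: "1 \<le> c" and Kn: "K < n"
  shows "(\<Sum>f\<in>injections K n. c ^ card (path_image K f \<inter> path_image K g))
       \<le> (1 + (2 * real K / (real n - real K)) * (c / (real n - real K))
                        * (\<Sum>j<K. (c / (real n - real K)) ^ j)) ^ K * real (card (injections K n))"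
proof -
  interpret pathgraph "path_image K g" "g ` {..<K}" K c by (rule pathgraph_inst[OF g c])
  have "(\<Sum>f\<in>injections K n. c ^ card (path_image K f \<inter> path_image K g))
      = (\<Sum>f\<in>injections K n. c ^ card (pe (map f [0..<K]) \<inter> path_image K g))"
    by (simp add: path_image_pe)
  also have "\<dots> \<le> (\<Sum>f\<in>injections K n. wt (path_image K g) c (map f [0..<K]))"
    by (intro sum_mono pow_le_wt c)
  also have "\<dots> = Ssum n K"
    unfolding Ssum_def by (rule sum_injections)
  finally show ?thesis using Ssum_bound[OF Kn] by (simp add: card_injections)
qed

definition xb :: "real \<Rightarrow> nat \<Rightarrow> nat \<Rightarrow> real" where
  "xb lam n K = (2 * real K / (real n - real K)) * ((1 / (lam / real n)) / (real n - real K))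
                * (\<Sum>j<K. ((1 / (lam / real n)) / (real n - real K)) ^ j)"

lemma injections_ne: "K \<le> n \<Longrightarrow> 0 < card (injections K n)"
proof -
  assume "K \<le> n"
  then have "[0..<K] \<in> Dl n K" by (auto simp: Dl_def)
  then have "0 < card (Dl n K)" using finite_Dl by (metis card_gt_0_iff empty_iff)
  then show ?thesis by (simp add: card_injections)
qed

lemma tv_bound_n:
  assumes Kn: "K < n" and p0: "0 < lam / real n" and p1: "lam / real n \<le> 1"
  shows "\<bar>measure_pmf.prob (P1 n lam K) A - measure_pmf.prob (P0 n lam) A\<bar>
         \<le> sqrt (exp (real K * xb lam n K) - 1)"
proof -
  let ?p = "lam / real n" and ?I = "injections K n" and ?E = "all_edges n"
  let ?c = "1 / ?p"
  let ?B = "(1 + (2 * real K / (real n - real K)) * (?c / (real n - real K))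
                        * (\<Sum>j<K. (?c / (real n - real K)) ^ j)) ^ K"
  have Npos: "0 < card ?I" using Kn by (intro injections_ne) simp
  then have Ine: "?I \<noteq> {}" by auto
  have c1: "1 \<le> ?c" by (rule le_divide_eq_1_pos[OF p0, THEN iffD2, OF p1])
  have lam0: "0 < lam" using p0 by (simp add: zero_less_divide_iff)
  have fP: "finite (Pow ?E)" using finite_all_edges by simp
  have "\<bar>measure_pmf.prob (P1 n lam K) A - measure_pmf.prob (P0 n lam) A\<bar>
      \<le> sqrt ((\<Sum>G\<in>Pow ?E. (Lr n ?p K G)\<^sup>2 * pmf (P0 n lam) G) - 1)"
    by (rule tv_chi[OF fP]) (auto simp: P0_def set_er pmf_P1[OF Ine p0 p1])
  also have "(\<Sum>G\<in>Pow ?E. (Lr n ?p K G)\<^sup>2 * pmf (P0 n lam) G)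
      = (\<Sum>f\<in>?I. \<Sum>g\<in>?I. ?c ^ card (path_image K f \<inter> path_image K g)) / (real (card ?I))\<^sup>2"
    unfolding P0_def using p0 p1 by (rule second_moment)
  also have "\<dots> \<le> ?B"
  proof -
    have "(\<Sum>f\<in>?I. \<Sum>g\<in>?I. ?c ^ card (path_image K f \<inter> path_image K g))
        = (\<Sum>g\<in>?I. \<Sum>f\<in>?I. ?c ^ card (path_image K f \<inter> path_image K g))" by (rule sum.swap)
    also have "\<dots> \<le> (\<Sum>g\<in>?I. ?B * real (card ?I))"
      by (intro sum_mono overlap_bound c1 Kn)
    also have "\<dots> = ?B * (real (card ?I))\<^sup>2" by (simp add: power2_eq_square)
    finally show ?thesis using Npos by (simp add: divide_le_eq)
  qed
  also have "?B \<le> exp (real K * xb lam n K)"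
    unfolding xb_def
  proof (rule pow_le_exp)
    have "0 < real n - real K" using Kn by simp
    then show "0 \<le> 2 * real K / (real n - real K) * (?c / (real n - real K)) * (\<Sum>j<K. (?c / (real n - real K)) ^ j)"
      using c1 lam0 by (intro mult_nonneg_nonneg sum_nonneg zero_le_power divide_nonneg_nonneg) auto
  qed
  finally show ?thesis by (simp add: real_sqrt_le_mono)
qed

definition xbr :: "real \<Rightarrow> real \<Rightarrow> nat \<Rightarrow> real" where
  "xbr lam N K = (2 * real K / (N - real K)) * ((1 / (lam / N)) / (N - real K))
                * (\<Sum>j<K. ((1 / (lam / N)) / (N - real K)) ^ j)"

lemma bound_gt1:
  fixes lam N :: real and K :: nat
  assumes lam: "1 < lam" and N: "0 < N" and kN: "real K / N \<le> (lam - 1) / (lam + 1)"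
  shows "real K * xbr lam N K \<le> (2 * lam * (lam + 1) / (lam - 1)) * (real K ^ 2 / N)"
proof -
  define k where "k = real K"
  define r where "r = (1 / (lam / N)) / (N - k)"
  have k0: "0 \<le> k" by (simp add: k_def)
  have kle: "k \<le> N * (lam - 1) / (lam + 1)" using kN N lam by (simp add: k_def divide_le_eq field_simps)
  have e1: "N * (lam - 1) / (lam + 1) = N - 2 * N / (lam + 1)" using lam by (simp add: field_simps)
  have D: "2 * N / (lam + 1) \<le> N - k" using kle e1 by linarith
  have D0: "0 < 2 * N / (lam + 1)" using N lam by simp
  have Dpos: "0 < N - k" using D D0 by linarith
  have r_eq: "r = N / (lam * (N - k))" unfolding r_def using N lam by (simp add: field_simps)
  have r0: "0 \<le> r" unfolding r_eq using N lam Dpos by simp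
  have r_le: "r \<le> (lam + 1) / (2 * lam)"
  proof -
    have "lam * (2 * N / (lam + 1)) \<le> lam * (N - k)" using D lam by (intro mult_left_mono) auto
    then have "2 * lam * N \<le> (lam + 1) * (lam * (N - k))" using lam by (simp add: field_simps)
    then show ?thesis unfolding r_eq using lam Dpos N by (simp add: field_simps)
  qed
  have r1: "r < 1"
  proof -
    have "(lam + 1) / (2 * lam) < 1" using lam by (simp add: field_simps)
    then show ?thesis using r_le by linarith
  qed
  have S: "(\<Sum>j<K. r ^ j) \<le> 2 * lam / (lam - 1)"
  proof -
    have "(\<Sum>j<K. r ^ j) = (1 - r ^ K) / (1 - r)" using r1 by (simp add: sum_gp_strict)
    also have "\<dots> \<le> 1 / (1 - r)" using r0 r1 by (intro divide_right_mono) auto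
    also have "\<dots> \<le> 1 / (1 - (lam + 1) / (2 * lam))"
    proof (rule divide_left_mono)
      show "1 - (lam + 1) / (2 * lam) \<le> 1 - r" using r_le by simp
      have "(lam + 1) / (2 * lam) < 1" using lam by (simp add: field_simps)
      then show "0 < (1 - r) * (1 - (lam + 1) / (2 * lam))" using r1 by simp
    qed simp
    also have "\<dots> = 2 * lam / (lam - 1)" using lam by (simp add: field_simps)
    finally show ?thesis .
  qed
  have A: "2 * k / (N - k) \<le> k * (lam + 1) / N"
  proof -
    have "2 * k / (N - k) \<le> 2 * k / (2 * N / (lam + 1))"
    proof (rule divide_left_mono[OF D])
      show "0 \<le> 2 * k" using k0 by simp
      show "0 < (N - k) * (2 * N / (lam + 1))" using Dpos D0 by (rule mult_pos_pos)
    qed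
    also have "\<dots> = k * (lam + 1) / N" using N lam by (simp add: field_simps)
    finally show ?thesis .
  qed
  have A0: "0 \<le> 2 * k / (N - k)" using k0 Dpos by simp
  have "real K * xbr lam N K = k * ((2 * k / (N - k) * r) * (\<Sum>j<K. r ^ j))"
    by (simp add: xbr_def k_def r_def)
  also have "\<dots> \<le> k * ((k * (lam + 1) / N * 1) * (2 * lam / (lam - 1)))"
  proof (rule mult_left_mono[OF _ k0])
    have a: "2 * k / (N - k) * r \<le> k * (lam + 1) / N * 1"
      by (rule mult_mono[OF A]) (use r1 r0 k0 N lam in auto)
    have b: "0 \<le> (\<Sum>j<K. r ^ j)" using r0 by (intro sum_nonneg) simp
    have c: "0 \<le> k * (lam + 1) / N * 1" using k0 N lam by simp
    show "(2 * k / (N - k) * r) * (\<Sum>j<K. r ^ j) \<le> (k * (lam + 1) / N * 1) * (2 * lam / (lam - 1))"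
      by (rule mult_mono[OF a S c b])
  qed
  also have "\<dots> = (2 * lam * (lam + 1) / (lam - 1)) * (real K ^ 2 / N)"
    using lam N by (simp add: k_def field_simps power2_eq_square)
  finally show ?thesis .
qed

lemma pow_le_exp1: "0 \<le> x \<Longrightarrow> (1 + x) ^ K \<le> exp (real K * x)"
proof -
  assume "0 \<le> x"
  have "(1 + x) ^ K \<le> (exp x) ^ K" using \<open>0 \<le> x\<close> by (intro power_mono) (auto simp: exp_ge_add_one_self)
  also have "\<dots> = exp (real K * x)" by (simp add: exp_of_nat_mult)
  finally show ?thesis .
qed

lemma bound_lt1:
  fixes lam N :: real and K :: nat
  assumes lam0: "0 < lam" and lam1: "lam < 1" and hl: "2 \<le> ln N" and N0: "0 < N"
    and t: "4 / ln (1 / lam) \<le> (ln N / ln (1 / lam) - real K) / ln (ln N)"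
    and h3: "(ln N)\<^sup>2 / N \<le> (ln (1 / lam))\<^sup>2 / 4"
    and h4: "ln N / N \<le> ln (1 / lam) / 2"
  shows "real K * xbr lam N K \<le> (8 * exp 1 / (lam * (ln (1 / lam)) ^ 3)) / ln N"
proof -
  define L where "L = ln (1 / lam)"
  define k where "k = real K"
  define u where "u = ln N / L"
  define r where "r = (1 / (lam / N)) / (N - k)"
  have L0: "0 < L" unfolding L_def using lam0 lam1 by simp
  have k0: "0 \<le> k" by (simp add: k_def)
  have lnN0: "0 < ln N" using hl by simp
  have ll0: "0 < ln (ln N)" using hl by simp
  have t': "4 / L * ln (ln N) \<le> u - k"
    using t ll0 unfolding L_def[symmetric] u_def k_def by (simp add: le_divide_eq)
  have t'': "0 \<le> 4 / L * ln (ln N)" using L0 ll0 by simp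
  have ku: "k \<le> u" using t' t'' by linarith
  have Lk: "L * k \<le> ln N - 4 * ln (ln N)"
  proof -
    have "L * k \<le> L * (u - 4 / L * ln (ln N))" using t' L0 by (intro mult_left_mono) auto
    also have "\<dots> = ln N - 4 * ln (ln N)" unfolding u_def using L0 by (simp add: field_simps)
    finally show ?thesis .
  qed
  have uN: "u \<le> N / 2" unfolding u_def using h4 L0 N0 unfolding L_def[symmetric]
    by (simp add: field_simps)
  have u2N: "u ^ 2 \<le> N / 4" unfolding u_def using h3 L0 N0 unfolding L_def[symmetric]
    by (simp add: field_simps power2_eq_square)
  have D: "N / 2 \<le> N - k" using ku uN by linarith
  have Dpos: "0 < N - k" using D N0 by linarith
  have r_eq: "r = (1 / lam) * (N / (N - k))" unfolding r_def using N0 lam0 by (simp add: field_simps)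
  have r_le: "r \<le> 2 / lam"
  proof -
    have "N / (N - k) \<le> N / (N / 2)" using D N0 by (intro divide_left_mono) auto
    also have "\<dots> = 2" using N0 by simp
    finally have "N / (N - k) \<le> 2" .
    then have "(1 / lam) * (N / (N - k)) \<le> (1 / lam) * 2" by (rule mult_left_mono) (use lam0 in simp)
    then show ?thesis unfolding r_eq by simp
  qed
  have r1: "1 \<le> r"
  proof -
    have "1 \<le> N / (N - k)" using Dpos k0 by simp
    moreover have "1 \<le> 1 / lam" using lam0 lam1 by simp
    ultimately have "1 * 1 \<le> (1 / lam) * (N / (N - k))" using lam0 by (intro mult_mono) auto
    then show ?thesis unfolding r_eq by simp
  qed
  have r0: "0 \<le> r" using r1 by simp
  have S1: "(\<Sum>j<K. r ^ j) \<le> k * r ^ K"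
  proof -
    have "(\<Sum>j<K. r ^ j) \<le> (\<Sum>j<K. r ^ K)" using r1 by (intro sum_mono power_increasing) auto
    then show ?thesis by (simp add: k_def)
  qed
  have P1: "(1 / lam) ^ K \<le> N / (ln N) ^ 4"
  proof -
    have e1: "exp (real K * L) = exp L ^ K" by (rule exp_of_nat_mult)
    have e2: "exp L = 1 / lam" using lam0 by (simp add: L_def)
    have "(1 / lam) ^ K = exp (L * k)" using e1 e2 by (simp add: k_def mult.commute)
    also have "\<dots> \<le> exp (ln N - 4 * ln (ln N))" using Lk by simp
    also have "\<dots> = N / (ln N) ^ 4"
    proof -
      have "exp (4 * ln (ln N)) = (ln N) ^ 4" using exp_of_nat_mult[of 4 "ln (ln N)"] lnN0 by simp
      then show ?thesis using N0 by (simp add: exp_diff)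
    qed
    finally show ?thesis .
  qed
  have P2: "(N / (N - k)) ^ K \<le> exp 1"
  proof -
    have "N / (N - k) = 1 + k / (N - k)" using Dpos by (simp add: field_simps)
    then have "(N / (N - k)) ^ K = (1 + k / (N - k)) ^ K" by simp
    also have "\<dots> \<le> exp (real K * (k / (N - k)))" using k0 Dpos by (intro pow_le_exp1) auto
    also have "\<dots> \<le> exp 1"
    proof -
      have "real K * (k / (N - k)) = k * k / (N - k)" by (simp add: k_def)
      also have "\<dots> \<le> k * k / (N / 2)" using D N0 k0 by (intro divide_left_mono) auto
      also have "\<dots> \<le> u * u / (N / 2)" using ku k0 N0 by (intro divide_right_mono mult_mono) auto
      also have "\<dots> \<le> 1" using u2N N0 by (simp add: field_simps power2_eq_square)
      finally show ?thesis by simp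
    qed
    finally show ?thesis .
  qed
  have rK: "r ^ K \<le> N / (ln N) ^ 4 * exp 1"
  proof -
    have "r ^ K = (1 / lam) ^ K * (N / (N - k)) ^ K" unfolding r_eq by (rule power_mult_distrib)
    also have "\<dots> \<le> N / (ln N) ^ 4 * exp 1"
      using P1 P2 N0 lnN0 Dpos by (intro mult_mono) auto
    finally show ?thesis .
  qed
  have A: "2 * k / (N - k) \<le> 4 * u / N"
  proof -
    have "2 * k / (N - k) \<le> 2 * k / (N / 2)" using D N0 k0 by (intro divide_left_mono) auto
    also have "\<dots> \<le> 2 * u / (N / 2)" using ku N0 by (intro divide_right_mono) auto
    also have "\<dots> = 4 * u / N" by simp
    finally show ?thesis .
  qed
  have A0: "0 \<le> 2 * k / (N - k)" using k0 Dpos by simp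
  have u0: "0 \<le> u" using k0 ku by simp
  have "real K * xbr lam N K = k * ((2 * k / (N - k) * r) * (\<Sum>j<K. r ^ j))"
    by (simp add: xbr_def k_def r_def)
  also have "\<dots> \<le> u * ((4 * u / N * (2 / lam)) * (u * (N / (ln N) ^ 4 * exp 1)))"
  proof (rule mult_mono[OF ku])
    have a: "2 * k / (N - k) * r \<le> 4 * u / N * (2 / lam)"
      by (rule mult_mono[OF A r_le]) (use u0 N0 r0 in auto)
    have b: "(\<Sum>j<K. r ^ j) \<le> u * (N / (ln N) ^ 4 * exp 1)"
    proof -
      have "(\<Sum>j<K. r ^ j) \<le> k * r ^ K" by (rule S1)
      also have "\<dots> \<le> u * (N / (ln N) ^ 4 * exp 1)"
        by (rule mult_mono[OF ku rK]) (use u0 r0 in auto)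
      finally show ?thesis .
    qed
    have c: "0 \<le> 4 * u / N * (2 / lam)" using u0 N0 lam0 by simp
    have d: "0 \<le> (\<Sum>j<K. r ^ j)" using r0 by (intro sum_nonneg) simp
    show "2 * k / (N - k) * r * (\<Sum>j<K. r ^ j) \<le> 4 * u / N * (2 / lam) * (u * (N / (ln N) ^ 4 * exp 1))"
      by (rule mult_mono[OF a b c d])
    show "0 \<le> u" by (rule u0)
    show "0 \<le> 2 * k / (N - k) * r * (\<Sum>j<K. r ^ j)" using A0 r0 d by (intro mult_nonneg_nonneg)
  qed
  also have "\<dots> = (8 * exp 1 / (lam * L ^ 3)) / ln N"
    unfolding u_def using L0 N0 lnN0 lam0 by (simp add: field_simps power_numeral_reduce)
  finally show ?thesis by (simp add: L_def)
qed

lemma xbr_nonneg: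
  assumes "0 < lam" "real K < N"
  shows "0 \<le> xbr lam N K"
  unfolding xbr_def using assms
  by (intro mult_nonneg_nonneg sum_nonneg zero_le_power divide_nonneg_nonneg) auto

lemma lim_gt1:
  fixes K :: "nat \<Rightarrow> nat"
  assumes lam: "1 < lam" and o: "(\<lambda>n. real (K n)) \<in> o(\<lambda>n. sqrt (real n))"
  shows "eventually (\<lambda>n. K n < n \<and> 0 < lam / real n \<and> lam / real n \<le> 1) sequentially"
    and "(\<lambda>n. real (K n) * xbr lam (real n) (K n)) \<longlonglongrightarrow> 0"
proof -
  have h1: "(\<lambda>n. real (K n) / sqrt (real n)) \<longlonglongrightarrow> 0" using smalloD_tendsto[OF o] .
  have h2: "(\<lambda>n. real (K n) ^ 2 / real n) \<longlonglongrightarrow> 0"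
  proof -
    have "(\<lambda>n. (real (K n) / sqrt (real n)) ^ 2) \<longlonglongrightarrow> 0 ^ 2" by (intro tendsto_power h1)
    moreover have "(real (K n) / sqrt (real n)) ^ 2 = real (K n) ^ 2 / real n" for n
      by (simp add: power_divide)
    ultimately show ?thesis by simp
  qed
  have h3: "(\<lambda>n. real (K n) / real n) \<longlonglongrightarrow> 0"
  proof -
    have s: "(\<lambda>n. 1 / sqrt (real n)) \<longlonglongrightarrow> 0" by real_asymp
    have "(\<lambda>n. (real (K n) / sqrt (real n)) * (1 / sqrt (real n))) \<longlonglongrightarrow> 0 * 0"
      by (intro tendsto_mult h1 s)
    moreover have "(real (K n) / sqrt (real n)) * (1 / sqrt (real n)) = real (K n) / real n" for n
    proof (cases "n = 0")
      case True then show ?thesis by simp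
    next
      case False
      then have "sqrt (real n) * sqrt (real n) = real n" by simp
      then show ?thesis by (metis times_divide_times_eq mult_1_right)
    qed
    ultimately show ?thesis by simp
  qed
  define \<delta> where "\<delta> = (lam - 1) / (lam + 1)"
  have d0: "0 < \<delta>" and d1: "\<delta> < 1" using lam by (auto simp: \<delta>_def field_simps)
  have ev1: "eventually (\<lambda>n. real (K n) / real n < \<delta>) sequentially"
    using order_tendstoD(2)[OF h3 d0] .
  have ev2: "eventually (\<lambda>n. lam \<le> real n) sequentially"
    using filterlim_real_sequentially by (simp add: filterlim_at_top)
  have ev: "eventually (\<lambda>n. real (K n) / real n < \<delta> \<and> lam \<le> real n) sequentially"
    using ev1 ev2 by (rule eventually_conj)
  show "eventually (\<lambda>n. K n < n \<and> 0 < lam / real n \<and> lam / real n \<le> 1) sequentially"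
    using ev
  proof (rule eventually_mono)
    fix n assume a: "real (K n) / real n < \<delta> \<and> lam \<le> real n"
    then have N0: "0 < real n" using lam by linarith
    have "real (K n) < \<delta> * real n" using a N0 by (simp add: divide_less_eq)
    also have "\<delta> * real n < 1 * real n" using d1 N0 by (intro mult_strict_right_mono)
    finally have "real (K n) < real n" by simp
    then show "K n < n \<and> 0 < lam / real n \<and> lam / real n \<le> 1" using a N0 lam by simp
  qed
  define C where "C = 2 * lam * (lam + 1) / (lam - 1)"
  show "(\<lambda>n. real (K n) * xbr lam (real n) (K n)) \<longlonglongrightarrow> 0"
  proof (rule tendsto_sandwich[where f = "\<lambda>_. 0" and h = "\<lambda>n. C * (real (K n) ^ 2 / real n)"])
    show "eventually (\<lambda>n. 0 \<le> real (K n) * xbr lam (real n) (K n)) sequentially"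
      using ev
    proof (rule eventually_mono)
      fix n assume a: "real (K n) / real n < \<delta> \<and> lam \<le> real n"
      then have N0: "0 < real n" using lam by linarith
      have "real (K n) < \<delta> * real n" using a N0 by (simp add: divide_less_eq)
      also have "\<delta> * real n < 1 * real n" using d1 N0 by (intro mult_strict_right_mono)
      finally have "real (K n) < real n" by simp
      then show "0 \<le> real (K n) * xbr lam (real n) (K n)" using lam by (simp add: xbr_nonneg)
    qed
    show "eventually (\<lambda>n. real (K n) * xbr lam (real n) (K n) \<le> C * (real (K n) ^ 2 / real n)) sequentially"
      using ev
    proof (rule eventually_mono)
      fix n assume a: "real (K n) / real n < \<delta> \<and> lam \<le> real n"
      then have N0: "0 < real n" using lam by linarith
      show "real (K n) * xbr lam (real n) (K n) \<le> C * (real (K n) ^ 2 / real n)"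
        unfolding C_def using lam N0 a by (intro bound_gt1) (auto simp: \<delta>_def)
    qed
    show "(\<lambda>n. 0) \<longlonglongrightarrow> (0::real)" by simp
    show "(\<lambda>n. C * (real (K n) ^ 2 / real n)) \<longlonglongrightarrow> 0"
      using tendsto_mult[OF tendsto_const h2, of C] by simp
  qed
qed

lemma k_lt_lt1:
  fixes lam N :: real and K :: nat
  assumes lam0: "0 < lam" and lam1: "lam < 1" and hl: "2 \<le> ln N" and N0: "0 < N"
    and t: "4 / ln (1 / lam) \<le> (ln N / ln (1 / lam) - real K) / ln (ln N)"
    and h4: "ln N / N \<le> ln (1 / lam) / 2"
  shows "real K < N"
proof -
  define L where "L = ln (1 / lam)"
  have L0: "0 < L" unfolding L_def using lam0 lam1 by simp
  have ll0: "0 < ln (ln N)" using hl by simp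
  have t': "4 / L * ln (ln N) \<le> ln N / L - real K"
    using t ll0 unfolding L_def[symmetric] by (simp add: le_divide_eq)
  have "0 \<le> 4 / L * ln (ln N)" using L0 ll0 by simp
  then have "real K \<le> ln N / L" using t' by linarith
  also have "\<dots> \<le> N / 2" using h4 L0 N0 unfolding L_def[symmetric] by (simp add: field_simps)
  also have "\<dots> < N" using N0 by simp
  finally show ?thesis .
qed

lemma lim_lt1:
  fixes K :: "nat \<Rightarrow> nat"
  assumes lam0: "0 < lam" and lam1: "lam < 1"
    and fl: "filterlim (\<lambda>n. (ln (real n) / ln (1 / lam) - real (K n)) / ln (ln (real n))) at_top sequentially"
  shows "eventually (\<lambda>n. K n < n \<and> 0 < lam / real n \<and> lam / real n \<le> 1) sequentially"
    and "(\<lambda>n. real (K n) * xbr lam (real n) (K n)) \<longlonglongrightarrow> 0"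
proof -
  define L where "L = ln (1 / lam)"
  have L0: "0 < L" unfolding L_def using lam0 lam1 by simp
  have ev1: "eventually (\<lambda>n. 4 / L \<le> (ln (real n) / L - real (K n)) / ln (ln (real n))) sequentially"
    using fl unfolding filterlim_at_top L_def by blast
  have lnlim: "filterlim (\<lambda>n. ln (real n)) at_top sequentially" by real_asymp
  have ev2: "eventually (\<lambda>n. 2 \<le> ln (real n)) sequentially"
    using lnlim unfolding filterlim_at_top by blast
  have l3: "(\<lambda>n. (ln (real n))\<^sup>2 / real n) \<longlonglongrightarrow> 0" by real_asymp
  have ev3: "eventually (\<lambda>n. (ln (real n))\<^sup>2 / real n \<le> L\<^sup>2 / 4) sequentially"
  proof -
    have "0 < L\<^sup>2 / 4" using L0 by simp
    from order_tendstoD(2)[OF l3 this] show ?thesis by (rule eventually_mono) simp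
  qed
  have l4: "(\<lambda>n. ln (real n) / real n) \<longlonglongrightarrow> 0" by real_asymp
  have ev4: "eventually (\<lambda>n. ln (real n) / real n \<le> L / 2) sequentially"
  proof -
    have "0 < L / 2" using L0 by simp
    from order_tendstoD(2)[OF l4 this] show ?thesis by (rule eventually_mono) simp
  qed
  have ev5: "eventually (\<lambda>n. 1 \<le> real n) sequentially"
    using filterlim_real_sequentially by (simp add: filterlim_at_top)
  have ev: "eventually (\<lambda>n. 4 / L \<le> (ln (real n) / L - real (K n)) / ln (ln (real n))
        \<and> 2 \<le> ln (real n) \<and> (ln (real n))\<^sup>2 / real n \<le> L\<^sup>2 / 4
        \<and> ln (real n) / real n \<le> L / 2 \<and> 1 \<le> real n) sequentially"
    using ev1 ev2 ev3 ev4 ev5 by eventually_elim auto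
  show "eventually (\<lambda>n. K n < n \<and> 0 < lam / real n \<and> lam / real n \<le> 1) sequentially"
    using ev
  proof (rule eventually_mono)
    fix n assume a: "4 / L \<le> (ln (real n) / L - real (K n)) / ln (ln (real n))
        \<and> 2 \<le> ln (real n) \<and> (ln (real n))\<^sup>2 / real n \<le> L\<^sup>2 / 4
        \<and> ln (real n) / real n \<le> L / 2 \<and> 1 \<le> real n"
    have "real (K n) < real n"
      using a lam0 lam1 by (intro k_lt_lt1[where lam = lam]) (auto simp: L_def)
    then show "K n < n \<and> 0 < lam / real n \<and> lam / real n \<le> 1" using a lam0 lam1 by simp
  qed
  define C where "C = 8 * exp 1 / (lam * L ^ 3)"
  show "(\<lambda>n. real (K n) * xbr lam (real n) (K n)) \<longlonglongrightarrow> 0"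
  proof (rule tendsto_sandwich[where f = "\<lambda>_. 0" and h = "\<lambda>n. C / ln (real n)"])
    show "eventually (\<lambda>n. 0 \<le> real (K n) * xbr lam (real n) (K n)) sequentially"
      using ev
    proof (rule eventually_mono)
      fix n assume a: "4 / L \<le> (ln (real n) / L - real (K n)) / ln (ln (real n))
          \<and> 2 \<le> ln (real n) \<and> (ln (real n))\<^sup>2 / real n \<le> L\<^sup>2 / 4
          \<and> ln (real n) / real n \<le> L / 2 \<and> 1 \<le> real n"
      have "real (K n) < real n"
        using a lam0 lam1 by (intro k_lt_lt1[where lam = lam]) (auto simp: L_def)
      then show "0 \<le> real (K n) * xbr lam (real n) (K n)" using lam0 by (simp add: xbr_nonneg)
    qed
    show "eventually (\<lambda>n. real (K n) * xbr lam (real n) (K n) \<le> C / ln (real n)) sequentially"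
      using ev
    proof (rule eventually_mono)
      fix n assume a: "4 / L \<le> (ln (real n) / L - real (K n)) / ln (ln (real n))
          \<and> 2 \<le> ln (real n) \<and> (ln (real n))\<^sup>2 / real n \<le> L\<^sup>2 / 4
          \<and> ln (real n) / real n \<le> L / 2 \<and> 1 \<le> real n"
      show "real (K n) * xbr lam (real n) (K n) \<le> C / ln (real n)"
        unfolding C_def L_def using a lam0 lam1 by (intro bound_lt1) (auto simp: L_def)
    qed
    show "(\<lambda>n. 0) \<longlonglongrightarrow> (0::real)" by simp
    have l5: "(\<lambda>n. 1 / ln (real n)) \<longlonglongrightarrow> 0" by real_asymp
    show "(\<lambda>n. C / ln (real n)) \<longlonglongrightarrow> 0"
      using tendsto_mult[OF tendsto_const l5, of C] by simp
  qed
qed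

lemma xb_xbr: "xb lam n K = xbr lam (real n) K"
  by (simp add: xb_def xbr_def)

theorem theorem6:
  fixes lam :: real and K :: "nat \<Rightarrow> nat"
  assumes "lam > 0"
  assumes "(lam > 1 \<and> (\<lambda>n. real (K n)) \<in> o(\<lambda>n. sqrt (real n)))
         \<or> (lam < 1 \<and> filterlim (\<lambda>n. (ln (real n) / ln (1 / lam) - real (K n)) / ln (ln (real n)))
                                 at_top sequentially)"
  shows "(\<lambda>n. tv_dist (P0 n lam) (P1 n lam (K n))) \<longlonglongrightarrow> 0
       \<and> (\<forall>T :: nat \<Rightarrow> nat set set \<Rightarrow> bool.
            (\<lambda>n. measure_pmf.prob (P1 n lam (K n)) {G. T n G}
               - measure_pmf.prob (P0 n lam) {G. T n G}) \<longlonglongrightarrow> 0)"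
proof -
  have key: "eventually (\<lambda>n. K n < n \<and> 0 < lam / real n \<and> lam / real n \<le> 1) sequentially
      \<and> (\<lambda>n. real (K n) * xbr lam (real n) (K n)) \<longlonglongrightarrow> 0"
    using assms(2)
  proof
    assume a: "lam > 1 \<and> (\<lambda>n. real (K n)) \<in> o(\<lambda>n. sqrt (real n))"
    then show ?thesis using lim_gt1[of lam K] by blast
  next
    assume a: "lam < 1 \<and> filterlim (\<lambda>n. (ln (real n) / ln (1 / lam) - real (K n)) / ln (ln (real n)))
                                 at_top sequentially"
    then show ?thesis using lim_lt1[of lam K] assms(1) by blast
  qed
  then have ev: "eventually (\<lambda>n. K n < n \<and> 0 < lam / real n \<and> lam / real n \<le> 1) sequentially"
    and lim: "(\<lambda>n. real (K n) * xbr lam (real n) (K n)) \<longlonglongrightarrow> 0" by auto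
  define \<beta> where "\<beta> n = sqrt (exp (real (K n) * xbr lam (real n) (K n)) - 1)" for n
  have blim: "\<beta> \<longlonglongrightarrow> 0"
  proof -
    have "(\<lambda>n. sqrt (exp (real (K n) * xbr lam (real n) (K n)) - 1)) \<longlonglongrightarrow> sqrt (exp 0 - 1)"
      by (intro tendsto_real_sqrt tendsto_diff tendsto_exp lim tendsto_const)
    then show ?thesis by (simp add: \<beta>_def[abs_def])
  qed
  have bnd: "eventually (\<lambda>n. \<forall>A. \<bar>measure_pmf.prob (P1 n lam (K n)) A - measure_pmf.prob (P0 n lam) A\<bar> \<le> \<beta> n) sequentially"
    using ev
  proof (rule eventually_mono)
    fix n assume a: "K n < n \<and> 0 < lam / real n \<and> lam / real n \<le> 1"
    show "\<forall>A. \<bar>measure_pmf.prob (P1 n lam (K n)) A - measure_pmf.prob (P0 n lam) A\<bar> \<le> \<beta> n"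
      using tv_bound_n[of "K n" n lam] a by (simp add: \<beta>_def xb_xbr)
  qed
  have part1: "(\<lambda>n. tv_dist (P0 n lam) (P1 n lam (K n))) \<longlonglongrightarrow> 0"
  proof (rule tendsto_sandwich[where f = "\<lambda>_. 0" and h = \<beta>])
    show "eventually (\<lambda>n. 0 \<le> tv_dist (P0 n lam) (P1 n lam (K n))) sequentially"
      using bnd
    proof (rule eventually_mono)
      fix n assume a: "\<forall>A. \<bar>measure_pmf.prob (P1 n lam (K n)) A - measure_pmf.prob (P0 n lam) A\<bar> \<le> \<beta> n"
      have bdd: "bdd_above ((\<lambda>A. \<bar>measure_pmf.prob (P0 n lam) A - measure_pmf.prob (P1 n lam (K n)) A\<bar>) ` UNIV)"
        using a by (intro bdd_aboveI2[where M = "\<beta> n"]) (simp add: abs_minus_commute)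
      show "0 \<le> tv_dist (P0 n lam) (P1 n lam (K n))"
        unfolding tv_dist_def by (rule cSUP_upper2[OF bdd, of "{}"]) auto
    qed
    show "eventually (\<lambda>n. tv_dist (P0 n lam) (P1 n lam (K n)) \<le> \<beta> n) sequentially"
      using bnd
    proof (rule eventually_mono)
      fix n assume a: "\<forall>A. \<bar>measure_pmf.prob (P1 n lam (K n)) A - measure_pmf.prob (P0 n lam) A\<bar> \<le> \<beta> n"
      show "tv_dist (P0 n lam) (P1 n lam (K n)) \<le> \<beta> n"
        unfolding tv_dist_def using a by (intro cSUP_least) (auto simp: abs_minus_commute)
    qed
    show "(\<lambda>n. 0) \<longlonglongrightarrow> (0::real)" by simp
    show "\<beta> \<longlonglongrightarrow> 0" by (rule blim)
  qed
  have part2: "(\<lambda>n. measure_pmf.prob (P1 n lam (K n)) {G. T n G}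
               - measure_pmf.prob (P0 n lam) {G. T n G}) \<longlonglongrightarrow> 0" for T :: "nat \<Rightarrow> nat set set \<Rightarrow> bool"
  proof -
    have "(\<lambda>n. \<bar>measure_pmf.prob (P1 n lam (K n)) {G. T n G}
               - measure_pmf.prob (P0 n lam) {G. T n G}\<bar>) \<longlonglongrightarrow> 0"
    proof (rule tendsto_sandwich[where f = "\<lambda>_. 0" and h = \<beta>])
      show "eventually (\<lambda>n. 0 \<le> \<bar>measure_pmf.prob (P1 n lam (K n)) {G. T n G}
               - measure_pmf.prob (P0 n lam) {G. T n G}\<bar>) sequentially" by simp
      show "eventually (\<lambda>n. \<bar>measure_pmf.prob (P1 n lam (K n)) {G. T n G}
               - measure_pmf.prob (P0 n lam) {G. T n G}\<bar> \<le> \<beta> n) sequentially"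
        using bnd by (rule eventually_mono) blast
      show "(\<lambda>n. 0) \<longlonglongrightarrow> (0::real)" by simp
      show "\<beta> \<longlonglongrightarrow> 0" by (rule blim)
    qed
    then show ?thesis by (simp add: tendsto_rabs_zero_iff)
  qed
  show ?thesis using part1 part2 by blast
qed

end
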